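(* Let $U$ be a unitary acting on $n$ qubits and let $\{u_1,\ldots,u_{2^n}\}$ be the columns of $U$. The unitary $U$ can be simulated using the unitary \[ U'=|0\rangle\langle 1|\otimes U+|1\rangle\langle 0|\otimes U^{\dagger}. \] The unitary $U'$ is a product of reflection operators constructed from the family of unit vectors \[ |w_j^{\pm}\rangle=\left(|1\rangle\otimes|j\rangle\pm|0\rangle\otimes|u_j\rangle\right)/\sqrt{2},\quad j=1,\ldots,2^n. \]
   Context: For a unit vector $|\psi\rangle$, the reflection operator is $R_{|\psi\rangle}=\mathbb{I}-2|\psi\rangle\langle\psi|$. Here $|j\rangle$ denotes the computational basis states of $n$ qubits and $|u_j\rangle$ the state given by the $j$-th column of $U$. "Simulated" means $U'$ maps $|1\rangle\otimes|\phi\rangle$ to $|0\rangle\otimes U|\phi\rangle$ for every $n$-qubit state $|\phi\rangle$ (using one ancilla qubit). *)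

theory Defs
  imports Complex_Main "Jordan_Normal_Form.Matrix"
begin

text \<open>Computational basis state |j> of n qubits (j = 0 .. 2^n - 1; the paper counts 1 .. 2^n).\<close>
definition ket :: "nat \<Rightarrow> nat \<Rightarrow> complex vec" where
  "ket n j = unit_vec (2 ^ n) j"

text \<open>Tensor (Kronecker) product; the left factor is the most significant part of the index.\<close>
definition kron_vec :: "complex vec \<Rightarrow> complex vec \<Rightarrow> complex vec" where
  "kron_vec u v = vec (dim_vec u * dim_vec v) (\<lambda>i. u $ (i div dim_vec v) * v $ (i mod dim_vec v))"

definition kron :: "complex mat \<Rightarrow> complex mat \<Rightarrow> complex mat" where
  "kron A B = mat (dim_row A * dim_row B) (dim_col A * dim_col B)
     (\<lambda>(i, j). A $$ (i div dim_row B, j div dim_col B) * B $$ (i mod dim_row B, j mod dim_col B))"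

definition outer :: "complex vec \<Rightarrow> complex vec \<Rightarrow> complex mat" where
  "outer u v = mat (dim_vec u) (dim_vec v) (\<lambda>(i, j). u $ i * cnj (v $ j))"

definition adj :: "complex mat \<Rightarrow> complex mat" where
  "adj A = mat (dim_col A) (dim_row A) (\<lambda>(i, j). cnj (A $$ (j, i)))"

definition unitary :: "nat \<Rightarrow> complex mat \<Rightarrow> bool" where
  "unitary d A \<longleftrightarrow> A \<in> carrier_mat d d \<and> adj A * A = 1\<^sub>m d \<and> A * adj A = 1\<^sub>m d"

definition vnorm :: "complex vec \<Rightarrow> real" where
  "vnorm v = sqrt (\<Sum>i<dim_vec v. (cmod (v $ i))\<^sup>2)"

definition refl_op :: "complex vec \<Rightarrow> complex mat" where
  "refl_op psi = 1\<^sub>m (dim_vec psi) - (2::complex) \<cdot>\<^sub>m outer psi psi"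

definition U_sim :: "nat \<Rightarrow> complex mat \<Rightarrow> complex mat" where
  "U_sim n U = kron (outer (ket 1 0) (ket 1 1)) U + kron (outer (ket 1 1) (ket 1 0)) (adj U)"

text \<open>|w_j^pm> = (|1>|j> pm |0>|u_j>)/sqrt 2, with sign s = 1 or s = -1.\<close>
definition w_vec :: "nat \<Rightarrow> complex mat \<Rightarrow> complex \<Rightarrow> nat \<Rightarrow> complex vec" where
  "w_vec n U s j = complex_of_real (1 / sqrt 2) \<cdot>\<^sub>v
     (kron_vec (ket 1 1) (ket n j) + s \<cdot>\<^sub>v kron_vec (ket 1 0) (col U j))"

end

theory Submission imports Defs begin

definition wf :: "nat \<Rightarrow> complex mat \<Rightarrow> complex \<Rightarrow> nat \<Rightarrow> nat \<Rightarrow> complex" where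
 "wf N U s j i = complex_of_real (1/sqrt 2) * ((if i = N + j then 1 else 0) + s * (if i < N then U $$ (i,j) else 0))"

lemma divmod_lo: "i < (N::nat) \<Longrightarrow> i div N = 0 \<and> i mod N = i" by simp
lemma divmod_hi: "(N::nat) \<le> i \<Longrightarrow> i < 2*N \<Longrightarrow> i div N = 1 \<and> i mod N = i - N"
proof -
  assume a: "N \<le> i" "i < 2*N"
  then have "i = N + (i - N)" "i - N < N" by auto
  then show ?thesis using a
    by (metis add_cancel_right_left div_add_self1 div_less mod_add_self1 mod_less not_less_zero zero_less_iff_neq_zero less_nat_zero_code)
qed

lemma w_vec_eq:
  assumes U: "U \<in> carrier_mat (2^n) (2^n)" and j: "j < 2^n"
  shows "w_vec n U s j = vec (2*2^n) (wf (2^n) U s j)"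
proof (rule eq_vecI)
  show "dim_vec (w_vec n U s j) = dim_vec (vec (2*2^n) (wf (2^n) U s j))"
    using U by (simp add: w_vec_def kron_vec_def ket_def)
next
  fix i assume "i < dim_vec (vec (2*2^n) (wf (2^n) U s j))"
  then have i: "i < 2*2^n" by simp
  show "w_vec n U s j $ i = vec (2*2^n) (wf (2^n) U s j) $ i"
  proof (cases "i < 2^n")
    case True
    then show ?thesis using U j i divmod_lo[OF True]
      by (simp add: w_vec_def kron_vec_def ket_def wf_def)
  next
    case False
    then have d: "i div 2^n = 1 \<and> i mod 2^n = i - 2^n" using divmod_hi[of "2^n" i] i by simp
    have "(i - 2^n = j) = (i = 2^n + j)" using False by auto
    then show ?thesis using U j i d False
      by (simp add: w_vec_def kron_vec_def ket_def wf_def)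
  qed
qed

lemma U_sim_eq:
  assumes U: "U \<in> carrier_mat (2^n) (2^n)"
  shows "U_sim n U = mat (2*2^n) (2*2^n) (\<lambda>(i,j). if i < 2^n \<and> 2^n \<le> j then U$$(i, j-2^n)
     else if 2^n \<le> i \<and> j < 2^n then cnj (U$$(j, i-2^n)) else 0)"
proof (rule eq_matI)
  fix i j assume "i < dim_row (mat (2*2^n) (2*2^n) (\<lambda>(i,j). if i < 2^n \<and> 2^n \<le> j then U$$(i, j-2^n)
     else if 2^n \<le> i \<and> j < 2^n then cnj (U$$(j, i-2^n)) else 0))"
    "j < dim_col (mat (2*2^n) (2*2^n) (\<lambda>(i,j). if i < 2^n \<and> 2^n \<le> j then U$$(i, j-2^n)
     else if 2^n \<le> i \<and> j < 2^n then cnj (U$$(j, i-2^n)) else 0))"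
  then have i: "i < 2*2^n" and j: "j < 2*2^n" by auto
  have di: "if i < 2^n then i div 2^n = 0 \<and> i mod 2^n = i else i div 2^n = 1 \<and> i mod 2^n = i - 2^n"
    using divmod_hi[of "2^n" i] i by auto
  have dj: "if j < 2^n then j div 2^n = 0 \<and> j mod 2^n = j else j div 2^n = 1 \<and> j mod 2^n = j - 2^n"
    using divmod_hi[of "2^n" j] j by auto
  have l1: "i - 2^n < 2^n" "j - 2^n < 2^n" using i j by auto
  show "U_sim n U $$ (i, j) = mat (2*2^n) (2*2^n) (\<lambda>(i,j). if i < 2^n \<and> 2^n \<le> j then U$$(i, j-2^n)
     else if 2^n \<le> i \<and> j < 2^n then cnj (U$$(j, i-2^n)) else 0) $$ (i, j)"
    using U i j di dj l1
    by (auto simp: U_sim_def kron_def outer_def ket_def adj_def split: if_splits)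
next
  show "dim_row (U_sim n U) = dim_row (mat (2*2^n) (2*2^n) (\<lambda>(i,j). if i < 2^n \<and> 2^n \<le> j then U$$(i, j-2^n)
     else if 2^n \<le> i \<and> j < 2^n then cnj (U$$(j, i-2^n)) else 0))"
    using U by (simp add: U_sim_def kron_def outer_def ket_def adj_def)
  show "dim_col (U_sim n U) = dim_col (mat (2*2^n) (2*2^n) (\<lambda>(i,j). if i < 2^n \<and> 2^n \<le> j then U$$(i, j-2^n)
     else if 2^n \<le> i \<and> j < 2^n then cnj (U$$(j, i-2^n)) else 0))"
    using U by (simp add: U_sim_def kron_def outer_def ket_def adj_def)
qed

lemma c_sq: "complex_of_real (1/sqrt 2) * complex_of_real (1/sqrt 2) = 1/2"
proof -
  have "(1/sqrt 2) * (1/sqrt 2) = (1/2::real)" unfolding times_divide_times_eq by simp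
  then show ?thesis by (metis of_real_mult of_real_divide of_real_1 of_real_numeral)
qed

lemma unitary_cols:
  assumes U: "U \<in> carrier_mat N N" and h: "adj U * U = 1\<^sub>m N" and a: "a < N" and b: "b < N"
  shows "(\<Sum>i<N. cnj (U$$(i,a)) * U$$(i,b)) = (if a = b then 1 else 0)"
proof -
  have "(adj U * U) $$ (a,b) = (if a = b then 1 else 0)" using h a b by simp
  moreover have "(adj U * U) $$ (a,b) = (\<Sum>i<N. cnj (U$$(i,a)) * U$$(i,b))"
    using U a b by (simp add: adj_def scalar_prod_def lessThan_atLeast0)
  ultimately show ?thesis by simp
qed

lemma sum_split2: "(\<Sum>i<2*N. f i) = (\<Sum>i<N. f i) + (\<Sum>i\<in>{N..<2*N}. f i)" for f :: "nat \<Rightarrow> 'a::comm_monoid_add"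
  by (simp add: lessThan_atLeast0 sum.atLeastLessThan_concat)

lemma wf_inner:
  assumes U: "U \<in> carrier_mat N N" and h: "adj U * U = 1\<^sub>m N" and a: "a < N" and b: "b < N"
  shows "(\<Sum>i<2*N. cnj (wf N U (-1) a i) * wf N U (-1) b i) = (if a = b then 1 else 0)"
proof -
  let ?c = "complex_of_real (1/sqrt 2)"
  have lo: "(\<Sum>i<N. cnj (wf N U (-1) a i) * wf N U (-1) b i) = 1/2 * (\<Sum>i<N. cnj (U$$(i,a)) * U$$(i,b))"
    unfolding sum_distrib_left
  proof (rule sum.cong)
    fix i assume "i \<in> {..<N}"
    then have "i < N" by simp
    then have "cnj (wf N U (-1) a i) * wf N U (-1) b i = (?c * ?c) * (cnj (U$$(i,a)) * U$$(i,b))"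
      by (simp add: wf_def)
    then show "cnj (wf N U (-1) a i) * wf N U (-1) b i = 1/2 * (cnj (U$$(i,a)) * U$$(i,b))"
      using c_sq by simp
  qed simp
  have hi: "(\<Sum>i\<in>{N..<2*N}. cnj (wf N U (-1) a i) * wf N U (-1) b i) = (\<Sum>i\<in>{N..<2*N}. if i = N + a then (if a = b then 1/2 else 0) else 0)"
  proof (rule sum.cong)
    fix i assume "i \<in> {N..<2*N}"
    then have "\<not> i < N" by simp
    then have "cnj (wf N U (-1) a i) * wf N U (-1) b i = (?c * ?c) * ((if i = N + a then 1 else 0) * (if i = N + b then 1 else 0))"
      by (simp add: wf_def)
    then show "cnj (wf N U (-1) a i) * wf N U (-1) b i = (if i = N + a then (if a = b then 1/2 else 0) else 0)"
      using c_sq by auto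
  qed simp
  have hi2: "(\<Sum>i\<in>{N..<2*N}. if i = N + a then (if a = b then 1/2 else 0) else (0::complex)) = (if a = b then 1/2 else 0)"
    using a by (cases "a = b") (simp_all add: sum.delta')
  show ?thesis unfolding sum_split2[of _ N] lo hi hi2 unitary_cols[OF U h a b] by simp
qed

lemma cmod_sq_re: "(cmod z)^2 = Re (cnj z * z)"
  by (simp add: cmod_def power2_eq_square)

lemma wf_norm:
  assumes U: "U \<in> carrier_mat N N" and h: "adj U * U = 1\<^sub>m N" and a: "a < N" and s: "cmod s = 1"
  shows "(\<Sum>i<2*N. (cmod (wf N U s a i))^2) = 1"
proof -
  have "(\<Sum>i<N. (cmod (U$$(i,a)))^2) = Re (\<Sum>i<N. cnj (U$$(i,a)) * U$$(i,a))"
    by (simp add: cmod_sq_re)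
  also have "\<dots> = 1" using unitary_cols[OF U h a a] by simp
  finally have u1: "(\<Sum>i<N. (cmod (U$$(i,a)))^2) = 1" .
  have cc: "(1/sqrt 2)^2 = (1/2::real)" unfolding power_divide by simp
  have lo: "(\<Sum>i<N. (cmod (wf N U s a i))^2) = 1/2 * (\<Sum>i<N. (cmod (U$$(i,a)))^2)"
    unfolding sum_distrib_left
  proof (rule sum.cong)
    fix i assume "i \<in> {..<N}"
    then have "i < N" by simp
    then have "cmod (wf N U s a i) = (1/sqrt 2) * cmod (U$$(i,a))"
      using s by (simp add: wf_def norm_mult norm_divide)
    then show "(cmod (wf N U s a i))^2 = 1/2 * (cmod (U$$(i,a)))^2"
      by (simp add: power_divide)
  qed simp
  have hi: "(\<Sum>i\<in>{N..<2*N}. (cmod (wf N U s a i))^2) = (\<Sum>i\<in>{N..<2*N}. if i = N + a then 1/2 else 0)"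
  proof (rule sum.cong)
    fix i assume "i \<in> {N..<2*N}"
    then have "\<not> i < N" by simp
    then have "cmod (wf N U s a i) = (1/sqrt 2) * (if i = N + a then 1 else 0)"
      by (simp add: wf_def norm_mult norm_divide)
    then show "(cmod (wf N U s a i))^2 = (if i = N + a then 1/2 else 0)"
      using cc by (simp add: power_mult_distrib)
  qed simp
  have hi2: "(\<Sum>i\<in>{N..<2*N}. if i = N + a then 1/2 else (0::real)) = 1/2"
    using a by (simp add: sum.delta')
  show ?thesis unfolding sum_split2[of _ N] lo hi hi2 u1 by simp
qed

definition Pm :: "nat \<Rightarrow> complex mat \<Rightarrow> nat set \<Rightarrow> complex mat" where
 "Pm N U A = mat (2*N) (2*N) (\<lambda>(i,j). \<Sum>b\<in>A. wf N U (-1) b i * cnj (wf N U (-1) b j))"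

lemma Pm_carrier: "Pm N U A \<in> carrier_mat (2*N) (2*N)" by (simp add: Pm_def)

lemma Pm_mult:
  assumes U: "U \<in> carrier_mat N N" and h: "adj U * U = 1\<^sub>m N"
    and A: "A \<subseteq> {..<N}" and B: "B \<subseteq> {..<N}"
  shows "Pm N U A * Pm N U B = Pm N U (A \<inter> B)"
proof (rule eq_matI)
  fix i j assume "i < dim_row (Pm N U (A \<inter> B))" "j < dim_col (Pm N U (A \<inter> B))"
  then have i: "i < 2*N" and j: "j < 2*N" by (auto simp: Pm_def)
  define x where "x = wf N U (-1)"
  have fA: "finite A" "finite B" using A B finite_subset by auto
  have "(Pm N U A * Pm N U B) $$ (i,j) = (\<Sum>k<2*N. (\<Sum>a\<in>A. x a i * cnj (x a k)) * (\<Sum>b\<in>B. x b k * cnj (x b j)))"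
    using i j by (simp add: Pm_def scalar_prod_def lessThan_atLeast0 x_def)
  also have "\<dots> = (\<Sum>k<2*N. \<Sum>a\<in>A. \<Sum>b\<in>B. (x a i * cnj (x b j)) * (cnj (x a k) * x b k))"
    unfolding sum_product by (intro sum.cong refl) (simp add: mult_ac)
  also have "\<dots> = (\<Sum>a\<in>A. \<Sum>b\<in>B. \<Sum>k<2*N. (x a i * cnj (x b j)) * (cnj (x a k) * x b k))"
    by (simp add: sum.swap[of _ "{..<2*N}"])
  also have "\<dots> = (\<Sum>a\<in>A. \<Sum>b\<in>B. (x a i * cnj (x b j)) * (if a = b then 1 else 0))"
  proof (rule sum.cong[OF refl], rule sum.cong[OF refl])
    fix a b assume "a \<in> A" "b \<in> B"
    then have "a < N" "b < N" using A B by auto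
    then show "(\<Sum>k<2*N. (x a i * cnj (x b j)) * (cnj (x a k) * x b k)) = (x a i * cnj (x b j)) * (if a = b then 1 else 0)"
      unfolding sum_distrib_left[symmetric] x_def using wf_inner[OF U h] by simp
  qed
  also have "\<dots> = (\<Sum>a\<in>A. if a \<in> B then x a i * cnj (x a j) else 0)"
    using fA by (intro sum.cong refl) (simp add: if_distrib cong: if_cong)
  also have "\<dots> = (\<Sum>a\<in>A \<inter> B. x a i * cnj (x a j))"
    using fA by (simp add: sum.inter_restrict)
  also have "\<dots> = Pm N U (A \<inter> B) $$ (i,j)" using i j by (simp add: Pm_def x_def)
  finally show "(Pm N U A * Pm N U B) $$ (i,j) = Pm N U (A \<inter> B) $$ (i,j)" .
qed (simp_all add: Pm_def)

lemma alg: fixes X Y :: "complex mat"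
  assumes X: "X \<in> carrier_mat d d" and Y: "Y \<in> carrier_mat d d"
  shows "(1\<^sub>m d - 2 \<cdot>\<^sub>m X) * (1\<^sub>m d - 2 \<cdot>\<^sub>m Y) = 1\<^sub>m d - 2 \<cdot>\<^sub>m X - 2 \<cdot>\<^sub>m Y + 4 \<cdot>\<^sub>m (X * Y)"
proof -
  have "(1\<^sub>m d - 2 \<cdot>\<^sub>m X) * (1\<^sub>m d - 2 \<cdot>\<^sub>m Y) = 1\<^sub>m d * (1\<^sub>m d - 2 \<cdot>\<^sub>m Y) - (2 \<cdot>\<^sub>m X) * (1\<^sub>m d - 2 \<cdot>\<^sub>m Y)"
    by (rule minus_mult_distrib_mat) (use X Y in auto)
  also have "\<dots> = (1\<^sub>m d - 2 \<cdot>\<^sub>m Y) - ((2 \<cdot>\<^sub>m X) * 1\<^sub>m d - (2 \<cdot>\<^sub>m X) * (2 \<cdot>\<^sub>m Y))"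
    using X Y by (subst mult_minus_distrib_mat[of _ d d]) auto
  also have "(2 \<cdot>\<^sub>m X) * (2 \<cdot>\<^sub>m Y) = 4 \<cdot>\<^sub>m (X * Y)"
    using X Y by (simp add: mult_smult_distrib[of _ d d] mult_smult_assoc_mat[of _ d d]) (intro eq_matI, auto)
  finally show ?thesis using X Y
    by (intro eq_matI) auto
qed

lemma refl_eq:
  assumes U: "U \<in> carrier_mat (2^n) (2^n)" and a: "a < 2^n"
  shows "refl_op (w_vec n U (-1) a) = 1\<^sub>m (2*2^n) - 2 \<cdot>\<^sub>m Pm (2^n) U {a}"
  using U a by (intro eq_matI) (simp_all add: refl_op_def w_vec_eq outer_def Pm_def)

lemma foldr_eq:
  assumes U: "U \<in> carrier_mat (2^n) (2^n)" and h: "adj U * U = 1\<^sub>m (2^n)"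
  shows "distinct xs \<Longrightarrow> set xs \<subseteq> {..<2^n} \<Longrightarrow>
    foldr (\<lambda>j M. refl_op (w_vec n U (-1) j) * M) xs (1\<^sub>m (2*2^n)) = 1\<^sub>m (2*2^n) - 2 \<cdot>\<^sub>m Pm (2^n) U (set xs)"
proof (induction xs)
  case Nil
  then show ?case by (intro eq_matI) (simp_all add: Pm_def)
next
  case (Cons a xs)
  then have a: "a < 2^n" and an: "a \<notin> set xs" and sx: "set xs \<subseteq> {..<2^n}" by auto
  have "foldr (\<lambda>j M. refl_op (w_vec n U (-1) j) * M) (a # xs) (1\<^sub>m (2*2^n))
     = (1\<^sub>m (2*2^n) - 2 \<cdot>\<^sub>m Pm (2^n) U {a}) * (1\<^sub>m (2*2^n) - 2 \<cdot>\<^sub>m Pm (2^n) U (set xs))"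
    using Cons refl_eq[OF U a] by simp
  also have "\<dots> = 1\<^sub>m (2*2^n) - 2 \<cdot>\<^sub>m Pm (2^n) U {a} - 2 \<cdot>\<^sub>m Pm (2^n) U (set xs) + 4 \<cdot>\<^sub>m (Pm (2^n) U {a} * Pm (2^n) U (set xs))"
    by (rule alg[OF Pm_carrier Pm_carrier])
  also have "Pm (2^n) U {a} * Pm (2^n) U (set xs) = Pm (2^n) U {}"
    using Pm_mult[OF U h, of "{a}" "set xs"] a an sx by auto
  finally show ?case using an
    by (intro eq_matI) (auto simp: Pm_def algebra_simps)
qed

lemma unitary_rows:
  assumes U: "U \<in> carrier_mat N N" and h: "U * adj U = 1\<^sub>m N" and a: "a < N" and b: "b < N"
  shows "(\<Sum>k<N. U$$(a,k) * cnj (U$$(b,k))) = (if a = b then 1 else 0)"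
proof -
  have "(U * adj U) $$ (a,b) = (if a = b then 1 else 0)" using h a b by simp
  moreover have "(U * adj U) $$ (a,b) = (\<Sum>k<N. U$$(a,k) * cnj (U$$(b,k)))"
    using U a b by (simp add: adj_def scalar_prod_def lessThan_atLeast0)
  ultimately show ?thesis by simp
qed

lemma P_full:
  assumes U: "U \<in> carrier_mat N N" and h: "U * adj U = 1\<^sub>m N"
  shows "1\<^sub>m (2*N) - 2 \<cdot>\<^sub>m Pm N U {..<N} = mat (2*N) (2*N) (\<lambda>(i,j). if i < N \<and> N \<le> j then U$$(i, j-N)
     else if N \<le> i \<and> j < N then cnj (U$$(j, i-N)) else 0)"
proof (rule eq_matI)
  fix i j assume "i < dim_row (mat (2*N) (2*N) (\<lambda>(i,j). if i < N \<and> N \<le> j then U$$(i, j-N)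
     else if N \<le> i \<and> j < N then cnj (U$$(j, i-N)) else 0))"
    "j < dim_col (mat (2*N) (2*N) (\<lambda>(i,j). if i < N \<and> N \<le> j then U$$(i, j-N)
     else if N \<le> i \<and> j < N then cnj (U$$(j, i-N)) else 0))"
  then have i: "i < 2*N" and j: "j < 2*N" by auto
  let ?c = "complex_of_real (1/sqrt 2)"
  define x where "x = wf N U (-1)"
  define S where "S = (\<Sum>b<N. x b i * cnj (x b j))"
  have lhs: "(1\<^sub>m (2*N) - 2 \<cdot>\<^sub>m Pm N U {..<N}) $$ (i,j) = (if i = j then 1 else 0) - 2 * S"
    using i j by (simp add: Pm_def S_def x_def)
  have cc: "?c * ?c = 1/2" by (rule c_sq)
  have S: "S = (if i < N \<and> j < N then (if i = j then 1/2 else 0)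
     else if N \<le> i \<and> N \<le> j then (if i = j then 1/2 else 0)
     else if i < N then - 1/2 * U$$(i, j-N) else - 1/2 * cnj (U$$(j, i-N)))"
  proof (cases "i < N")
    case iT: True
    show ?thesis
    proof (cases "j < N")
      case True
      have "S = (\<Sum>b<N. 1/2 * (U$$(i,b) * cnj (U$$(j,b))))"
        unfolding S_def x_def using iT True
        by (intro sum.cong refl) (simp add: wf_def cc[symmetric] mult_ac)
      also have "\<dots> = 1/2 * (if i = j then 1 else 0)"
        unfolding sum_distrib_left[symmetric] unitary_rows[OF U h iT True] ..
      finally show ?thesis using iT True by (cases "i = j") simp_all
    next
      case False
      have "S = (\<Sum>b<N. if b = j - N then - 1/2 * U$$(i,b) else 0)"
        unfolding S_def x_def using iT False
        by (intro sum.cong refl) (auto simp: wf_def cc[symmetric] mult_ac)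
      also have "\<dots> = - 1/2 * U$$(i, j-N)" using j False by (simp add: sum.delta')
      finally show ?thesis using iT False by simp
    qed
  next
    case iF: False
    show ?thesis
    proof (cases "j < N")
      case True
      have "S = (\<Sum>b<N. if b = i - N then - 1/2 * cnj (U$$(j,b)) else 0)"
        unfolding S_def x_def using iF True
        by (intro sum.cong refl) (auto simp: wf_def cc[symmetric] mult_ac)
      also have "\<dots> = - 1/2 * cnj (U$$(j, i-N))" using i iF by (simp add: sum.delta')
      finally show ?thesis using iF True by simp
    next
      case False
      have "S = (\<Sum>b<N. if b = i - N then (if i = j then 1/2 else 0) else 0)"
        unfolding S_def x_def using iF False
        by (intro sum.cong refl) (auto simp: wf_def cc[symmetric] mult_ac)
      also have "\<dots> = (if i = j then 1/2 else 0)" using i j iF False by (simp add: sum.delta'; linarith)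
      finally show ?thesis using iF False by simp
    qed
  qed
  show "(1\<^sub>m (2*N) - 2 \<cdot>\<^sub>m Pm N U {..<N}) $$ (i,j) = mat (2*N) (2*N) (\<lambda>(i,j). if i < N \<and> N \<le> j then U$$(i, j-N)
     else if N \<le> i \<and> j < N then cnj (U$$(j, i-N)) else 0) $$ (i,j)"
    unfolding lhs S using i j by auto
qed (simp_all add: Pm_def)

lemma mult_part:
  assumes U: "U \<in> carrier_mat (2^n) (2^n)" and phi: "\<phi> \<in> carrier_vec (2^n)"
  shows "mat (2*2^n) (2*2^n) (\<lambda>(i,j). if i < 2^n \<and> 2^n \<le> j then U$$(i, j-2^n)
     else if 2^n \<le> i \<and> j < 2^n then cnj (U$$(j, i-2^n)) else 0) *\<^sub>v kron_vec (ket 1 1) \<phi>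
    = kron_vec (ket 1 0) (U *\<^sub>v \<phi>)"
proof -
  define N :: nat where "N = 2^n"
  have N0: "0 < N" by (simp add: N_def)
  have kv: "kron_vec (ket 1 1) \<phi> = vec (2*N) (\<lambda>k. if N \<le> k then \<phi> $ (k - N) else 0)"
  proof (rule eq_vecI)
    fix k assume "k < dim_vec (vec (2*N) (\<lambda>k. if N \<le> k then \<phi> $ (k - N) else 0))"
    then have k: "k < 2*N" by simp
    show "kron_vec (ket 1 1) \<phi> $ k = vec (2*N) (\<lambda>k. if N \<le> k then \<phi> $ (k - N) else 0) $ k"
      using phi k divmod_hi[of N k] N0 by (cases "k < N") (auto simp: kron_vec_def ket_def N_def)
  qed (use phi in \<open>simp add: kron_vec_def ket_def N_def\<close>)
  show ?thesis unfolding N_def[symmetric] kv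
  proof (rule eq_vecI)
    fix i assume "i < dim_vec (kron_vec (ket 1 0) (U *\<^sub>v \<phi>))"
    then have i: "i < 2*N" using U by (simp add: kron_vec_def ket_def N_def)
    define g where "g = (\<lambda>k. (if i < N \<and> N \<le> k then U$$(i, k-N)
     else if N \<le> i \<and> k < N then cnj (U$$(k, i-N)) else 0) * (if N \<le> k then \<phi> $ (k - N) else 0))"
    have "(mat (2*N) (2*N) (\<lambda>(i,j). if i < N \<and> N \<le> j then U$$(i, j-N)
     else if N \<le> i \<and> j < N then cnj (U$$(j, i-N)) else 0) *\<^sub>v vec (2*N) (\<lambda>k. if N \<le> k then \<phi> $ (k - N) else 0)) $ i
      = (\<Sum>k<2*N. g k)"
      using i by (simp add: scalar_prod_def lessThan_atLeast0 g_def)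
    also have "\<dots> = (\<Sum>k\<in>{N..<2*N}. g k)"
      unfolding sum_split2 by (simp add: g_def)
    also have "\<dots> = (\<Sum>k\<in>{0..<N}. g (k + N))"
      using sum.shift_bounds_nat_ivl[of g 0 N N] by (simp add: mult_2)
    also have "\<dots> = (if i < N then (\<Sum>k\<in>{0..<N}. U$$(i,k) * \<phi> $ k) else 0)"
      by (auto simp: g_def)
    also have "\<dots> = kron_vec (ket 1 0) (U *\<^sub>v \<phi>) $ i"
      using i U phi divmod_hi[of N i] N0
      by (cases "i < N") (auto simp: kron_vec_def ket_def N_def scalar_prod_def)
    finally show "(mat (2*N) (2*N) (\<lambda>(i,j). if i < N \<and> N \<le> j then U$$(i, j-N)
     else if N \<le> i \<and> j < N then cnj (U$$(j, i-N)) else 0) *\<^sub>v vec (2*N) (\<lambda>k. if N \<le> k then \<phi> $ (k - N) else 0)) $ i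
      = kron_vec (ket 1 0) (U *\<^sub>v \<phi>) $ i" .
  qed (use U in \<open>simp add: kron_vec_def ket_def N_def\<close>)
qed

theorem lemma3:
  fixes n :: nat and U :: "complex mat"
  assumes "unitary (2 ^ n) U"
  shows "unitary (2 ^ (n + 1)) (U_sim n U)
    \<and> (\<forall>\<phi> \<in> carrier_vec (2 ^ n).
          U_sim n U *\<^sub>v kron_vec (ket 1 1) \<phi> = kron_vec (ket 1 0) (U *\<^sub>v \<phi>))
    \<and> (\<forall>j < 2 ^ n. vnorm (w_vec n U 1 j) = 1 \<and> vnorm (w_vec n U (-1) j) = 1)
    \<and> U_sim n U = foldr (\<lambda>j M. refl_op (w_vec n U (-1) j) * M) [0..<2 ^ n] (1\<^sub>m (2 ^ (n + 1)))"
proof -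
  have U: "U \<in> carrier_mat (2^n) (2^n)" and h1: "adj U * U = 1\<^sub>m (2^n)" and h2: "U * adj U = 1\<^sub>m (2^n)"
    using assms by (auto simp: unitary_def)
  have p2: "(2::nat) ^ (n + 1) = 2 * 2^n" by simp
  define M where "M = mat (2*2^n) (2*2^n) (\<lambda>(i,j). if i < 2^n \<and> 2^n \<le> j then U$$(i, (j::nat)-2^n)
     else if 2^n \<le> i \<and> j < 2^n then cnj (U$$(j, i-2^n)) else 0)"
  have UM: "U_sim n U = M" unfolding M_def by (rule U_sim_eq[OF U])
  have UP: "U_sim n U = 1\<^sub>m (2*2^n) - 2 \<cdot>\<^sub>m Pm (2^n) U {..<2^n}"
    unfolding UM M_def by (rule P_full[OF U h2, symmetric])
  have fold: "foldr (\<lambda>j M. refl_op (w_vec n U (-1) j) * M) [0..<2 ^ n] (1\<^sub>m (2 ^ (n + 1)))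
      = 1\<^sub>m (2*2^n) - 2 \<cdot>\<^sub>m Pm (2^n) U {..<2^n}"
    using foldr_eq[OF U h1, of "[0..<2^n]"] by (simp add: p2 atLeast0LessThan)
  have car: "U_sim n U \<in> carrier_mat (2*2^n) (2*2^n)" unfolding UM M_def by simp
  have adjU: "adj (U_sim n U) = U_sim n U"
    unfolding UM M_def by (intro eq_matI) (auto simp: adj_def)
  have sq: "U_sim n U * U_sim n U = 1\<^sub>m (2*2^n)"
  proof -
    have "U_sim n U * U_sim n U = 1\<^sub>m (2*2^n) - 2 \<cdot>\<^sub>m Pm (2^n) U {..<2^n} - 2 \<cdot>\<^sub>m Pm (2^n) U {..<2^n}
       + 4 \<cdot>\<^sub>m (Pm (2^n) U {..<2^n} * Pm (2^n) U {..<2^n})"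
      unfolding UP by (rule alg[OF Pm_carrier Pm_carrier])
    also have "Pm (2^n) U {..<2^n} * Pm (2^n) U {..<2^n} = Pm (2^n) U {..<2^n}"
      using Pm_mult[OF U h1, of "{..<2^n}" "{..<2^n}"] by simp
    finally show ?thesis by (intro eq_matI) (auto simp: Pm_def)
  qed
  have un: "unitary (2 ^ (n + 1)) (U_sim n U)"
    unfolding unitary_def p2 using car adjU sq by simp
  have mv: "\<forall>\<phi> \<in> carrier_vec (2 ^ n). U_sim n U *\<^sub>v kron_vec (ket 1 1) \<phi> = kron_vec (ket 1 0) (U *\<^sub>v \<phi>)"
    unfolding UM M_def using mult_part[OF U] by blast
  have nm: "\<forall>j < 2 ^ n. vnorm (w_vec n U 1 j) = 1 \<and> vnorm (w_vec n U (-1) j) = 1"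
  proof (intro allI impI conjI)
    fix j :: nat assume j: "j < 2^n"
    show "vnorm (w_vec n U 1 j) = 1"
      using wf_norm[OF U h1 j, of 1] by (simp add: vnorm_def w_vec_eq[OF U j])
    show "vnorm (w_vec n U (-1) j) = 1"
      using wf_norm[OF U h1 j, of "-1"] by (simp add: vnorm_def w_vec_eq[OF U j])
  qed
  show ?thesis using un mv nm fold UP by simp
qed

end
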